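(* Let $n\ge 1$ and $r$ be integers. A general quadratic form in $n+1$ variables has an apolar star configuration $\mathbb{X}(r)\subset\mathbb{P}^n$ if and only if $r\geq n+1$.
   Context: Let $S=\mathbb{C}[x_0,\dots,x_n]$ and $T=\mathbb{C}[y_0,\dots,y_n]$, where $T$ acts on $S$ by differentiation, $y_j=\partial/\partial x_j$. For a form $F\in S$, $F^\perp=\{\partial\in T:\partial F=0\}$. A finite set of points $\mathbb{X}\subset\mathbb{P}^n=\mathbb{P}(S_1)$ with defining ideal $I(\mathbb{X})\subseteq T$ is apolar to $F$ if $I(\mathbb{X})\subseteq F^\perp$. A star configuration $\mathbb{X}(r)\subset\mathbb{P}^n$: take $r$ linear forms $l_1,\dots,l_r\in T_1$ such that any $n+1$ of them are linearly independent; $\mathbb{X}(r)$ is the set of $\binom{r}{n}$ points obtained by intersecting the hyperplanes $\{l_i=0\}$ $n$ at a time in all possible ways (for $r<n+1$ the paper regards no star configuration as existing). "A general form" means any form in a suitable nonempty Zariski open subset of the space of forms of that degree. *)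

theory Defs
  imports Complex_Main "HOL-Library.Poly_Mapping"
begin

text \<open>Multivariate polynomials over a coefficient ring, with variables of type 'v,
  represented (as in the AFP entry Polynomials) as finitely supported maps from monomials
  (finitely supported exponent vectors 'v =>0 nat) to coefficients.\<close>
type_synonym ('v, 'a) mpoly = "('v \<Rightarrow>\<^sub>0 nat) \<Rightarrow>\<^sub>0 'a"

definition mpoly_eval :: "('v, 'a::comm_semiring_1) mpoly \<Rightarrow> ('v \<Rightarrow> 'a) \<Rightarrow> 'a" where
  "mpoly_eval p v = (\<Sum>m\<in>Poly_Mapping.keys p. Poly_Mapping.lookup p m * (\<Prod>i\<in>Poly_Mapping.keys m. v i ^ Poly_Mapping.lookup m i))"

definition mon_deg :: "('v \<Rightarrow>\<^sub>0 nat) \<Rightarrow> nat" where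
  "mon_deg \<alpha> = (\<Sum>i\<in>Poly_Mapping.keys \<alpha>. Poly_Mapping.lookup \<alpha> i)"

text \<open>Polynomials in the variables with indices 0..n (the rings S and T).\<close>
definition poly_ring :: "nat \<Rightarrow> (nat, complex) mpoly set" where
  "poly_ring n = {p. \<forall>\<alpha>\<in>Poly_Mapping.keys p. Poly_Mapping.keys \<alpha> \<subseteq> {..n}}"

text \<open>Forms of degree d in S = C[x_0..x_n] (the zero polynomial included).\<close>
definition forms :: "nat \<Rightarrow> nat \<Rightarrow> (nat, complex) mpoly set" where
  "forms n d = {F \<in> poly_ring n. \<forall>\<alpha>\<in>Poly_Mapping.keys F. mon_deg \<alpha> = d}"

text \<open>Action of T on S by differentiation (y_j = d/dx_j): the coefficient of x^gamma in
  D F.  The monomial y^beta sends x^(beta+gamma) to prod_i (beta_i+gamma_i)!/gamma_i! x^gamma,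
  and kills monomials not divisible by x^beta.\<close>
definition diff_act :: "(nat, complex) mpoly \<Rightarrow> (nat, complex) mpoly \<Rightarrow> (nat \<Rightarrow>\<^sub>0 nat) \<Rightarrow> complex" where
  "diff_act D F \<gamma> = (\<Sum>\<beta>\<in>Poly_Mapping.keys D. Poly_Mapping.lookup D \<beta> * Poly_Mapping.lookup F (\<beta> + \<gamma>) *
      (\<Prod>i\<in>Poly_Mapping.keys (\<beta> + \<gamma>). of_nat (fact (Poly_Mapping.lookup (\<beta> + \<gamma>) i)) / of_nat (fact (Poly_Mapping.lookup \<gamma> i))))"

definition perp :: "nat \<Rightarrow> (nat, complex) mpoly \<Rightarrow> (nat, complex) mpoly set" where
  "perp n F = {D \<in> poly_ring n. \<forall>\<gamma>. diff_act D F \<gamma> = 0}"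

definition lin_eval :: "nat \<Rightarrow> (nat \<Rightarrow> complex) \<Rightarrow> (nat \<Rightarrow> complex) \<Rightarrow> complex" where
  "lin_eval n c v = (\<Sum>k\<le>n. c k * v k)"

text \<open>r linear forms l_0..l_(r-1) in T_1 (coefficient vectors on y_0..y_n) such that any
  n+1 of them are linearly independent; by the paper's convention a star configuration
  requires r >= n+1.\<close>
definition star_forms :: "nat \<Rightarrow> nat \<Rightarrow> (nat \<Rightarrow> nat \<Rightarrow> complex) \<Rightarrow> bool" where
  "star_forms n r l \<longleftrightarrow> r \<ge> n + 1 \<and>
     (\<forall>J \<subseteq> {..<r}. card J = n + 1 \<longrightarrow>
        (\<forall>a :: nat \<Rightarrow> complex. (\<forall>k\<le>n. (\<Sum>j\<in>J. a j * l j k) = 0) \<longrightarrow> (\<forall>j\<in>J. a j = 0)))"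

text \<open>The points of X(r): for each n-subset J of the forms, the point of P^n cut out by
  {l_j = 0 : j in J}; its affine cone is the set of v with l_j(v) = 0 for j in J.\<close>
definition star_cone :: "nat \<Rightarrow> nat \<Rightarrow> (nat \<Rightarrow> nat \<Rightarrow> complex) \<Rightarrow> (nat \<Rightarrow> complex) set" where
  "star_cone n r l = {v. \<exists>J \<subseteq> {..<r}. card J = n \<and> (\<forall>j\<in>J. lin_eval n (l j) v = 0)}"

definition star_ideal :: "nat \<Rightarrow> nat \<Rightarrow> (nat \<Rightarrow> nat \<Rightarrow> complex) \<Rightarrow> (nat, complex) mpoly set" where
  "star_ideal n r l = {g \<in> poly_ring n. \<forall>v\<in>star_cone n r l. mpoly_eval g v = 0}"

definition has_apolar_star :: "nat \<Rightarrow> nat \<Rightarrow> (nat, complex) mpoly \<Rightarrow> bool" where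
  "has_apolar_star n r F \<longleftrightarrow>
     (\<exists>l. star_forms n r l \<and> star_ideal n r l \<subseteq> perp n F)"

text \<open>A general form of degree d in n+1 variables has property P: P holds on a nonempty
  Zariski open subset of the space of forms, i.e. there is a polynomial h in the coefficients
  (variables indexed by monomials) not vanishing identically on the space of forms such that
  every form F with h(F) /= 0 satisfies P.\<close>
definition general_form :: "nat \<Rightarrow> nat \<Rightarrow> ((nat, complex) mpoly \<Rightarrow> bool) \<Rightarrow> bool" where
  "general_form n d P \<longleftrightarrow>
     (\<exists>h :: (nat \<Rightarrow>\<^sub>0 nat, complex) mpoly.
        (\<exists>F\<in>forms n d. mpoly_eval h (Poly_Mapping.lookup F) \<noteq> 0) \<and>
        (\<forall>F\<in>forms n d. mpoly_eval h (Poly_Mapping.lookup F) \<noteq> 0 \<longrightarrow> P F))"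

end

theory Submission
  imports Defs "Jordan_Normal_Form.Determinant"
begin


definition injN :: "nat \<Rightarrow> (nat \<Rightarrow> nat \<Rightarrow> complex) \<Rightarrow> bool" where
  "injN N Q \<longleftrightarrow> (\<forall>v. (\<forall>m<N. (\<Sum>k<N. Q m k * v k) = 0) \<longrightarrow> (\<forall>k<N. v k = 0))"

definition symm :: "(nat \<Rightarrow> nat \<Rightarrow> complex) \<Rightarrow> bool" where
  "symm A \<longleftrightarrow> (\<forall>i k. A i k = A k i)"

definition suppl :: "nat \<Rightarrow> (nat \<Rightarrow> nat \<Rightarrow> complex) \<Rightarrow> bool" where
  "suppl s A \<longleftrightarrow> (\<forall>i k. s \<le> i \<or> s \<le> k \<longrightarrow> A i k = 0)"

definition diagP :: "nat \<Rightarrow> nat \<Rightarrow> (nat \<Rightarrow> nat \<Rightarrow> complex) \<Rightarrow> (nat \<Rightarrow> nat \<Rightarrow> complex) \<Rightarrow> (nat \<Rightarrow> complex) \<Rightarrow> bool" where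
  "diagP N s A Q d \<longleftrightarrow> (\<forall>i k. A i k = (\<Sum>m<N. d m * Q m i * Q m k)) \<and>
     (\<forall>m<s. \<forall>k. s \<le> k \<longrightarrow> Q m k = 0) \<and>
     (\<forall>m. s \<le> m \<longrightarrow> m < N \<longrightarrow> (\<forall>k. Q m k = (if k = m then 1 else 0)) \<and> d m = 0) \<and>
     injN N Q"

lemma fun_inverse:
  fixes Q :: "nat \<Rightarrow> nat \<Rightarrow> complex"
  assumes inj: "\<And>v. (\<forall>m<N. (\<Sum>k<N. Q m k * v k) = 0) \<Longrightarrow> \<forall>k<N. v k = 0"
  shows "\<exists>R. (\<forall>i<N. \<forall>j<N. (\<Sum>k<N. Q i k * R k j) = (if i = j then 1 else 0)) \<and>
             (\<forall>i<N. \<forall>j<N. (\<Sum>k<N. R i k * Q k j) = (if i = j then 1 else 0))"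
proof -
  define A where "A = mat N N (\<lambda>(i,j). Q i j)"
  have A: "A \<in> carrier_mat N N" unfolding A_def by simp
  have "det A \<noteq> 0"
  proof
    assume "det A = 0"
    then obtain v where v: "v \<in> carrier_vec N" "v \<noteq> 0\<^sub>v N" "A *\<^sub>v v = 0\<^sub>v N"
      using det_0_iff_vec_prod_zero[OF A] by blast
    have "\<forall>m<N. (\<Sum>k<N. Q m k * v $ k) = 0"
    proof (intro allI impI)
      fix m assume m: "m < N"
      have "(A *\<^sub>v v) $ m = 0" using v(3) m by simp
      then show "(\<Sum>k<N. Q m k * v $ k) = 0"
        using m v(1) by (simp add: A_def scalar_prod_def lessThan_atLeast0)
    qed
    then have "\<forall>k<N. v $ k = 0" using inj by blast
    then have "v = 0\<^sub>v N" using v(1) by (intro eq_vecI) auto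
    with v(2) show False by simp
  qed
  then have "A \<in> Units (ring_mat TYPE(complex) N ())" by (rule det_non_zero_imp_unit[OF A])
  then obtain B where B: "B \<in> carrier_mat N N" "B * A = 1\<^sub>m N" "A * B = 1\<^sub>m N"
    unfolding Units_def ring_mat_def by auto
  show ?thesis
  proof (intro exI[of _ "\<lambda>i j. B $$ (i,j)"] conjI allI impI)
    fix i j assume ij: "i < N" "j < N"
    have "(A * B) $$ (i,j) = (if i = j then 1 else 0)" using B(3) ij by simp
    then show "(\<Sum>k<N. Q i k * B $$ (k, j)) = (if i = j then 1 else 0)"
      using ij B(1) by (simp add: A_def scalar_prod_def lessThan_atLeast0)
  next
    fix i j assume ij: "i < N" "j < N"
    have "(B * A) $$ (i,j) = (if i = j then 1 else 0)" using B(2) ij by simp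
    then show "(\<Sum>k<N. B $$ (i, k) * Q k j) = (if i = j then 1 else 0)"
      using ij B(1) by (simp add: A_def scalar_prod_def lessThan_atLeast0)
  qed
qed


lemma sum_delta_mult: "(m::nat) < N \<Longrightarrow> (\<Sum>k<N. (if k = m then 1 else 0) * (v k::complex)) = v m"
proof -
  assume "m < N"
  have "(\<Sum>k<N. (if k = m then 1 else 0) * (v k::complex)) = (\<Sum>k<N. if k = m then v k else 0)"
    by (rule sum.cong) auto
  also have "\<dots> = v m" using \<open>m < N\<close> by (subst sum.delta) auto
  finally show ?thesis .
qed

lemma diag_base: "suppl 0 A \<Longrightarrow> diagP N 0 A (\<lambda>m k. if k = m then 1 else 0) (\<lambda>_. 0)"
  unfolding diagP_def injN_def suppl_def
  by (auto simp: sum_delta_mult)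

lemma diag_case1:
  assumes sN: "s < N"
    and IH: "\<And>A. symm A \<Longrightarrow> suppl s A \<Longrightarrow> \<exists>Q d. diagP N s A Q d"
    and sym: "symm A" and sup: "suppl (Suc s) A" and piv: "A s s \<noteq> 0"
  shows "\<exists>Q d. diagP N (Suc s) A Q d"
proof -
  define a where "a = A s s"
  define u where "u k = (if k \<le> s then A s k / a else 0)" for k
  have us: "u s = 1" using piv by (simp add: u_def a_def)
  define A' where "A' i k = A i k - a * u i * u k" for i k
  have symA': "symm A'" using sym unfolding symm_def A'_def by (simp add: mult.commute mult.left_commute)
  have supA': "suppl s A'"
    unfolding suppl_def
  proof (intro allI impI)
    fix i k assume "s \<le> i \<or> s \<le> k"
    then consider "i = s" | "s < i" | "k = s" | "s < k" by linarith
    then show "A' i k = 0"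
    proof cases
      case 1 then show ?thesis using sup piv
        by (cases "k \<le> s") (auto simp: A'_def u_def a_def suppl_def)
    next
      case 2 then show ?thesis using sup by (auto simp: A'_def u_def suppl_def)
    next
      case 3 then show ?thesis using sup piv sym
        by (cases "i \<le> s") (auto simp: A'_def u_def a_def suppl_def symm_def)
    next
      case 4 then show ?thesis using sup by (auto simp: A'_def u_def suppl_def)
    qed
  qed
  obtain Q d where D: "diagP N s A' Q d" using IH[OF symA' supA'] by blast
  define Q' where "Q' = Q(s := u)"
  define d' where "d' = d(s := a)"
  have Da: "\<And>i k. A' i k = (\<Sum>m<N. d m * Q m i * Q m k)"
    and Db: "\<And>m k. m < s \<Longrightarrow> s \<le> k \<Longrightarrow> Q m k = 0"
    and Dc: "\<And>m k. s \<le> m \<Longrightarrow> m < N \<Longrightarrow> Q m k = (if k = m then 1 else 0)"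
    and Dd: "\<And>m. s \<le> m \<Longrightarrow> m < N \<Longrightarrow> d m = 0"
    and Dinj: "injN N Q"
    using D unfolding diagP_def by auto
  have sin: "s \<in> {..<N}" using sN by simp
  have "diagP N (Suc s) A Q' d'"
    unfolding diagP_def
  proof (intro conjI allI impI)
    fix i k
    have "(\<Sum>m<N. d' m * Q' m i * Q' m k) = a * u i * u k + (\<Sum>m\<in>{..<N}-{s}. d m * Q m i * Q m k)"
      by (simp add: sum.remove[OF _ sin] Q'_def d'_def)
    also have "(\<Sum>m\<in>{..<N}-{s}. d m * Q m i * Q m k) = (\<Sum>m<N. d m * Q m i * Q m k)"
      using sum.remove[OF _ sin, of "\<lambda>m. d m * Q m i * Q m k"] Dd[of s] sN by simp
    also have "\<dots> = A' i k" using Da by simp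
    finally show "A i k = (\<Sum>m<N. d' m * Q' m i * Q' m k)" by (simp add: A'_def)
  next
    fix m k assume "m < Suc s" "Suc s \<le> k"
    then show "Q' m k = 0" using Db[of m k] by (auto simp: Q'_def u_def)
  next
    fix m k assume "Suc s \<le> m" "m < N"
    then show "Q' m k = (if k = m then 1 else 0)" using Dc[of m k] by (auto simp: Q'_def)
  next
    fix m assume "Suc s \<le> m" "m < N"
    then show "d' m = 0" using Dd[of m] by (auto simp: d'_def)
  next
    show "injN N Q'"
      unfolding injN_def
    proof (rule allI, rule impI)
      fix v assume H: "\<forall>m<N. (\<Sum>k<N. Q' m k * v k) = 0"
      define w where "w k = (if k < s then v k else 0)" for k
      have "\<forall>m<N. (\<Sum>k<N. Q m k * w k) = 0"
      proof (intro allI impI)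
        fix m assume mN: "m < N"
        show "(\<Sum>k<N. Q m k * w k) = 0"
        proof (cases "m < s")
          case True
          have "(\<Sum>k<N. Q m k * w k) = (\<Sum>k<N. Q' m k * v k)"
            using True Db[of m] by (intro sum.cong) (auto simp: w_def Q'_def)
          then show ?thesis using H mN by simp
        next
          case False
          then show ?thesis using Dc[of m] mN by (simp add: sum_delta_mult w_def)
        qed
      qed
      then have w0: "\<forall>k<N. w k = 0" using Dinj unfolding injN_def by blast
      have vlow: "\<And>k. k < s \<Longrightarrow> v k = 0"
      proof -
        fix k assume "k < s"
        then have "w k = 0" using w0 sN by simp
        then show "v k = 0" using \<open>k < s\<close> by (simp add: w_def)
      qed
      have vhigh: "\<And>k. s < k \<Longrightarrow> k < N \<Longrightarrow> v k = 0"
      proof -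
        fix k assume "s < k" "k < N"
        then have "(\<Sum>j<N. Q' k j * v j) = 0" using H by simp
        then show "v k = 0" using \<open>s < k\<close> \<open>k < N\<close> Dc[of k] by (simp add: Q'_def sum_delta_mult)
      qed
      have "(\<Sum>j<N. Q' s j * v j) = 0" using H sN by simp
      moreover have "(\<Sum>j<N. Q' s j * v j) = (\<Sum>j<N. (if j = s then 1 else 0) * v j)"
        using vlow us by (intro sum.cong) (auto simp: Q'_def u_def)
      ultimately have "v s = 0" using sN by (simp add: sum_delta_mult)
      then show "\<forall>k<N. v k = 0" using vlow vhigh by (metis linorder_neqE_nat)
    qed
  qed
  then show ?thesis by blast
qed

lemma diag_case2:
  assumes sN: "s < N"
    and IH: "\<And>A. symm A \<Longrightarrow> suppl s A \<Longrightarrow> \<exists>Q d. diagP N s A Q d"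
    and sym: "symm A" and sup: "suppl (Suc s) A" and piv: "A s s = 0" and nz: "A i s \<noteq> 0"
  shows "\<exists>Q d. diagP N (Suc s) A Q d"
proof -
  have "i \<noteq> s" using piv nz by auto
  moreover have "i < Suc s" using nz sup unfolding suppl_def by (metis not_less)
  ultimately have is_: "i < s" by simp
  define c :: complex where "c = (if A i i + 2 * A i s \<noteq> 0 then 1 else -1)"
  have c2: "c * c = 1" by (simp add: c_def)
  define B where "B j k = A j k + (if j = s then c * A i k else 0) + (if k = s then c * A j i else 0)
      + (if j = s \<and> k = s then c * c * A i i else 0)" for j k
  have symB: "symm B" using sym unfolding symm_def B_def by auto
  have supB: "suppl (Suc s) B" using sup is_ unfolding suppl_def B_def by auto
  have Bss: "B s s \<noteq> 0"
  proof -
    have "A s i = A i s" using sym unfolding symm_def by blast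
    then have "B s s = c * (2 * A i s) + A i i" using piv c2 unfolding B_def
      by (simp add: algebra_simps)
    moreover have "c * (2 * A i s) + A i i \<noteq> 0"
    proof (cases "A i i + 2 * A i s \<noteq> 0")
      case True then show ?thesis by (simp add: c_def add.commute)
    next
      case False
      then have "A i i = - 2 * A i s" by (simp add: eq_neg_iff_add_eq_0 add.commute)
      then show ?thesis using nz False by (simp add: c_def)
    qed
    ultimately show ?thesis by simp
  qed
  have "\<exists>Q d. diagP N (Suc s) B Q d" by (rule diag_case1[OF sN IH symB supB Bss])
  then obtain Q d where D: "diagP N (Suc s) B Q d" by blast
  have Da: "\<And>j k. B j k = (\<Sum>m<N. d m * Q m j * Q m k)"
    and Db: "\<And>m k. m < Suc s \<Longrightarrow> Suc s \<le> k \<Longrightarrow> Q m k = 0"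
    and Dc: "\<And>m k. Suc s \<le> m \<Longrightarrow> m < N \<Longrightarrow> Q m k = (if k = m then 1 else 0)"
    and Dd: "\<And>m. Suc s \<le> m \<Longrightarrow> m < N \<Longrightarrow> d m = 0"
    and Dinj: "injN N Q"
    using D unfolding diagP_def by auto
  define Q' where "Q' m k = Q m k - (if k = s then c * Q m i else 0)" for m k
  define S where "S j k = (\<Sum>m<N. d m * Q m j * Q m k)" for j k
  have ifsum: "(\<Sum>m<N. if P then f m else 0) = (if P then (\<Sum>m<N. f m) else 0)" for P and f :: "nat \<Rightarrow> complex"
    by simp
  have term_eq: "d m * Q' m j * Q' m k = d m * Q m j * Q m k - (if k = s then c * (d m * Q m j * Q m i) else 0)
     - (if j = s then c * (d m * Q m i * Q m k) else 0) + (if j = s \<and> k = s then c * c * (d m * Q m i * Q m i) else 0)"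
    for m j k
    unfolding Q'_def by (cases "j = s"; cases "k = s") (simp_all add: algebra_simps)
  have expand: "(\<Sum>m<N. d m * Q' m j * Q' m k) = S j k - (if k = s then c * S j i else 0)
     - (if j = s then c * S i k else 0) + (if j = s \<and> k = s then c * c * S i i else 0)" for j k
    unfolding term_eq S_def sum.distrib sum_subtractf ifsum sum_distrib_left[symmetric] by simp
  have "diagP N (Suc s) A Q' d"
    unfolding diagP_def
  proof (intro conjI allI impI)
    fix j k
    have SB: "\<And>j k. S j k = B j k" using Da by (simp add: S_def)
    have s1: "A s i = A i s" "A k i = A i k" using sym unfolding symm_def by blast+
      show "A j k = (\<Sum>m<N. d m * Q' m j * Q' m k)"
      unfolding expand SB using \<open>i \<noteq> s\<close> c2 s1 unfolding B_def
      by (cases "j = s"; cases "k = s") (simp_all add: algebra_simps)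
  next
    fix m k assume "m < Suc s" "Suc s \<le> k"
    then show "Q' m k = 0" using Db[of m k] by (auto simp: Q'_def)
  next
    fix m k assume "Suc s \<le> m" "m < N"
    moreover have "m \<noteq> i" using is_ \<open>Suc s \<le> m\<close> by simp
    ultimately have "Q m k = (if k = m then 1 else 0)" "Q m i = 0" using Dc[of m k] Dc[of m i] by auto
    then show "Q' m k = (if k = m then 1 else 0)" by (simp add: Q'_def)
  next
    fix m assume "Suc s \<le> m" "m < N"
    then show "d m = 0" using Dd by simp
  next
    have iN: "i < N" using is_ sN by simp
    show "injN N Q'"
      unfolding injN_def
    proof (rule allI, rule impI)
      fix v assume H: "\<forall>m<N. (\<Sum>k<N. Q' m k * v k) = 0"
      define w where "w k = v k - (if k = i then c * v s else 0)" for k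
      have e1: "(\<Sum>k<N. Q' m k * v k) = (\<Sum>k<N. Q m k * v k) - c * Q m i * v s" for m
      proof -
        have "(\<Sum>k<N. Q' m k * v k) = (\<Sum>k<N. Q m k * v k - (if k = s then c * Q m i * v s else 0))"
          by (rule sum.cong) (auto simp: Q'_def algebra_simps)
        also have "\<dots> = (\<Sum>k<N. Q m k * v k) - c * Q m i * v s"
          unfolding sum_subtractf using sN by simp
        finally show ?thesis .
      qed
      have e2: "(\<Sum>k<N. Q m k * w k) = (\<Sum>k<N. Q m k * v k) - c * Q m i * v s" for m
      proof -
        have "(\<Sum>k<N. Q m k * w k) = (\<Sum>k<N. Q m k * v k - (if k = i then c * Q m i * v s else 0))"
          by (rule sum.cong) (auto simp: w_def algebra_simps)
        also have "\<dots> = (\<Sum>k<N. Q m k * v k) - c * Q m i * v s"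
          unfolding sum_subtractf using iN by simp
        finally show ?thesis .
      qed
      have "\<forall>m<N. (\<Sum>k<N. Q m k * w k) = 0" using H e1 e2 by simp
      then have w0: "\<forall>k<N. w k = 0" using Dinj unfolding injN_def by blast
      have vs: "v s = 0" using w0 sN \<open>i \<noteq> s\<close> by (auto simp: w_def)
      show "\<forall>k<N. v k = 0"
      proof (intro allI impI)
        fix k assume "k < N"
        then have "w k = 0" using w0 by simp
        then show "v k = 0" using vs by (auto simp: w_def split: if_splits)
      qed
    qed
  qed
  then show ?thesis by blast
qed

lemma diag_case3:
  assumes sN: "s < N"
    and IH: "\<And>A. symm A \<Longrightarrow> suppl s A \<Longrightarrow> \<exists>Q d. diagP N s A Q d"
    and sym: "symm A" and sup: "suppl (Suc s) A" and z: "\<And>i. A i s = 0"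
  shows "\<exists>Q d. diagP N (Suc s) A Q d"
proof -
  have "suppl s A"
    unfolding suppl_def
  proof (intro allI impI)
    fix i k assume ik: "s \<le> i \<or> s \<le> k"
    show "A i k = 0"
    proof (cases "i = s")
      case True
      have "A i k = A k i" using sym unfolding symm_def by blast
      then show ?thesis using z True by simp
    next
      case False
      show ?thesis
      proof (cases "k = s")
        case True then show ?thesis using z by simp
      next
        case False
        then have "Suc s \<le> i \<or> Suc s \<le> k" using ik \<open>i \<noteq> s\<close> by auto
        then show ?thesis using sup unfolding suppl_def by blast
      qed
    qed
  qed
  then obtain Q d where D: "diagP N s A Q d" using IH sym by blast
  have Da: "\<And>i k. A i k = (\<Sum>m<N. d m * Q m i * Q m k)"
    and Db: "\<And>m k. m < s \<Longrightarrow> s \<le> k \<Longrightarrow> Q m k = 0"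
    and Dc: "\<And>m k. s \<le> m \<Longrightarrow> m < N \<Longrightarrow> Q m k = (if k = m then 1 else 0)"
    and Dd: "\<And>m. s \<le> m \<Longrightarrow> m < N \<Longrightarrow> d m = 0"
    and Dinj: "injN N Q"
    using D unfolding diagP_def by auto
  have "diagP N (Suc s) A Q d"
    unfolding diagP_def
  proof (intro conjI allI impI)
    fix i k show "A i k = (\<Sum>m<N. d m * Q m i * Q m k)" by (rule Da)
  next
    fix m k assume m: "m < Suc s" and k: "Suc s \<le> k"
    show "Q m k = 0"
    proof (cases "m < s")
      case True then show ?thesis using Db k by simp
    next
      case False
      then have "m = s" using m by simp
      then show ?thesis using Dc[of m k] sN k by simp
    qed
  next
    fix m k assume "Suc s \<le> m" "m < N"
    then show "Q m k = (if k = m then 1 else 0)" using Dc by simp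
  next
    fix m assume "Suc s \<le> m" "m < N"
    then show "d m = 0" using Dd by simp
  next
    show "injN N Q" by (rule Dinj)
  qed
  then show ?thesis by blast
qed

lemma diag_claim: "s \<le> N \<Longrightarrow> symm A \<Longrightarrow> suppl s A \<Longrightarrow> \<exists>Q d. diagP N s A Q d"
proof (induction s arbitrary: A)
  case 0
  then show ?case using diag_base by blast
next
  case (Suc s)
  have IH: "\<And>A. symm A \<Longrightarrow> suppl s A \<Longrightarrow> \<exists>Q d. diagP N s A Q d" using Suc by simp
  have sN: "s < N" using Suc by simp
  show ?case
  proof (cases "A s s = 0")
    case False
    then show ?thesis using diag_case1[OF sN IH Suc(3) Suc(4)] by blast
  next
    case True
    show ?thesis
    proof (cases "\<exists>i. A i s \<noteq> 0")
      case True
      then obtain i where "A i s \<noteq> 0" by blast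
      then show ?thesis using diag_case2[OF sN IH Suc(3) Suc(4) \<open>A s s = 0\<close>] by blast
    next
      case False
      then show ?thesis using diag_case3[OF sN IH Suc(3) Suc(4)] by blast
    qed
  qed
qed



lemma vander:
  fixes a :: "nat \<Rightarrow> complex"
  assumes fin: "finite J" and card: "card J \<le> N"
    and H: "\<And>k. k < N \<Longrightarrow> (\<Sum>j\<in>J. a j * of_nat j ^ k) = 0" and j0: "j0 \<in> J"
  shows "a j0 = 0"
proof -
  define p where "p = (\<Prod>j\<in>J - {j0}. [:- of_nat j, 1:] :: complex poly)"
  have "degree p \<le> (\<Sum>j\<in>J - {j0}. degree [:- of_nat j, 1 :: complex:])"
    unfolding p_def using degree_prod_sum_le[of "J - {j0}" "\<lambda>j. [:- of_nat j, 1 :: complex:]"] fin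
    by (simp add: o_def)
  also have "\<dots> = card (J - {j0})" by simp
  also have "\<dots> < N"
  proof -
    have "card J > 0" using fin j0 card_gt_0_iff by blast
    moreover have "card (J - {j0}) = card J - 1" using j0 by (simp add: card_Diff_singleton)
    ultimately show ?thesis using card by linarith
  qed
  finally have deg: "degree p < N" .
  have "(\<Sum>j\<in>J. a j * poly p (of_nat j)) = (\<Sum>j\<in>J. \<Sum>i\<le>degree p. coeff p i * (a j * of_nat j ^ i))"
    by (simp add: poly_altdef sum_distrib_left mult_ac)
  also have "\<dots> = (\<Sum>i\<le>degree p. coeff p i * (\<Sum>j\<in>J. a j * of_nat j ^ i))"
    by (subst sum.swap) (simp add: sum_distrib_left)
  also have "\<dots> = 0" using deg H by (intro sum.neutral) auto
  finally have S0: "(\<Sum>j\<in>J. a j * poly p (of_nat j)) = 0" .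
  have z: "poly p (of_nat j) = 0" if "j \<in> J - {j0}" for j
    unfolding p_def poly_prod using that fin by (intro prod_zero) auto
  have "(\<Sum>j\<in>J. a j * poly p (of_nat j)) = a j0 * poly p (of_nat j0)"
    using sum.remove[OF fin j0, of "\<lambda>j. a j * poly p (of_nat j)"] z by simp
  moreover have "poly p (of_nat j0) \<noteq> 0"
    unfolding p_def poly_prod using fin by (auto simp: prod_zero_iff)
  ultimately show ?thesis using S0 by simp
qed

lemma left_inv_inj:
  fixes X Y :: "nat \<Rightarrow> nat \<Rightarrow> complex"
  assumes XY: "\<And>i j. i < N \<Longrightarrow> j < N \<Longrightarrow> (\<Sum>k<N. X i k * Y k j) = (if i = j then 1 else 0)"
    and H: "\<And>c. c < N \<Longrightarrow> (\<Sum>k<N. Y c k * v k) = 0" and i: "i < N"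
  shows "v i = 0"
proof -
  have "v i = (\<Sum>j<N. (if j = i then 1 else 0) * v j)"
    using sum_delta_mult[OF i, of v] by simp
  also have "\<dots> = (\<Sum>j<N. \<Sum>k<N. X i k * Y k j * v j)"
  proof (rule sum.cong[OF refl])
    fix j assume "j \<in> {..<N}"
    then have "(\<Sum>k<N. X i k * Y k j) = (if j = i then 1 else 0)" using XY[OF i, of j] by auto
    then show "(if j = i then 1 else 0) * v j = (\<Sum>k<N. X i k * Y k j * v j)"
      unfolding sum_distrib_right[symmetric] by simp
  qed
  also have "\<dots> = (\<Sum>k<N. X i k * (\<Sum>j<N. Y k j * v j))"
    by (subst sum.swap) (simp add: sum_distrib_left mult_ac)
  also have "\<dots> = 0" using H by simp
  finally show ?thesis .
qed


lemma LA_package: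
  fixes A :: "nat \<Rightarrow> nat \<Rightarrow> complex" and N :: nat
  assumes symA: "symm A" and supA: "suppl N A"
  shows "\<exists>l Q d. (\<forall>i k. A i k = (\<Sum>m<N. d m * Q m i * Q m k)) \<and>
     (\<forall>j<N. \<forall>m<N. (\<Sum>k<N. l j k * Q m k) = (if j = m then 1 else 0)) \<and>
     injN N Q \<and>
     (\<forall>J a. finite J \<longrightarrow> card J = N \<longrightarrow> (\<forall>k<N. (\<Sum>j\<in>J. a j * l j k) = 0) \<longrightarrow> (\<forall>j\<in>J. a j = 0))"
proof -
  obtain Q d where D: "diagP N N A Q d" using diag_claim[of N N A] symA supA by blast
  have Da: "\<And>i k. A i k = (\<Sum>m<N. d m * Q m i * Q m k)" and Dinj: "injN N Q"
    using D unfolding diagP_def by auto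
  obtain R where QR: "\<And>i j. i < N \<Longrightarrow> j < N \<Longrightarrow> (\<Sum>k<N. Q i k * R k j) = (if i = j then 1 else 0)"
    using fun_inverse[of N Q] Dinj unfolding injN_def by blast
  define W where "W a j = (of_nat j ^ a :: complex)" for a j :: nat
  have Winj: "\<forall>k<N. x k = 0" if "\<forall>a<N. (\<Sum>j<N. W a j * x j) = 0" for x
  proof (intro allI impI)
    fix k assume "k < N"
    show "x k = 0"
      by (rule vander[of "{..<N}" N x k]) (use that \<open>k < N\<close> in \<open>auto simp: W_def mult.commute\<close>)
  qed
  obtain V where WV': "\<forall>i<N. \<forall>j<N. (\<Sum>k<N. W i k * V k j) = (if i = j then 1 else 0)"
      and VW': "\<forall>i<N. \<forall>j<N. (\<Sum>k<N. V i k * W k j) = (if i = j then 1 else 0)"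
    using fun_inverse[of N W, OF Winj] by blast
  have WV: "\<And>i j. i < N \<Longrightarrow> j < N \<Longrightarrow> (\<Sum>k<N. W i k * V k j) = (if i = j then 1 else 0)"
    and VW: "\<And>i j. i < N \<Longrightarrow> j < N \<Longrightarrow> (\<Sum>k<N. V i k * W k j) = (if i = j then 1 else 0)"
    using WV' VW' by auto
  define l where "l j k = (\<Sum>b<N. R k b * (\<Sum>a<N. V b a * W a j))" for j k
  have lj: "l j k = R k j" if "j < N" for j k
  proof -
    have "l j k = (\<Sum>b<N. R k b * (if b = j then 1 else 0))"
      unfolding l_def using VW that by (intro sum.cong) auto
    also have "\<dots> = R k j" using that by (simp add: if_distrib[of "\<lambda>x. R k _ * x"] cong: if_cong)
    finally show ?thesis .
  qed
  show ?thesis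
  proof (intro exI conjI allI impI)
    show "\<And>i k. A i k = (\<Sum>m<N. d m * Q m i * Q m k)" by (rule Da)
  next
    fix j m assume "j < N" "m < N"
    then show "(\<Sum>k<N. l j k * Q m k) = (if j = m then 1 else 0)"
      using QR[of m j] by (simp add: lj mult.commute)
  next
    show "injN N Q" by (rule Dinj)
  next
    fix J a assume fin: "finite J" and cJ: "card J = N" and H: "\<forall>k<N. (\<Sum>j\<in>J. a j * l j k) = 0"
    define z where "z i = (\<Sum>j\<in>J. a j * W i j)" for i
    define y where "y b = (\<Sum>i<N. V b i * z i)" for b
    have e: "(\<Sum>j\<in>J. a j * l j k) = (\<Sum>b<N. R k b * y b)" for k
    proof -
      have "(\<Sum>j\<in>J. a j * l j k) = (\<Sum>j\<in>J. \<Sum>b<N. \<Sum>i<N. a j * R k b * V b i * W i j)"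
        unfolding l_def by (simp add: sum_distrib_left mult_ac)
      also have "\<dots> = (\<Sum>b<N. \<Sum>i<N. \<Sum>j\<in>J. a j * R k b * V b i * W i j)"
        by (subst sum.swap) (simp add: sum.swap[of _ J])
      also have "\<dots> = (\<Sum>b<N. R k b * y b)"
        unfolding y_def z_def by (simp add: sum_distrib_left mult_ac)
      finally show ?thesis .
    qed
    have y0: "y b = 0" if "b < N" for b
      by (rule left_inv_inj[of N Q R y b]) (use QR H e that in auto)
    have z0: "z i = 0" if "i < N" for i
      by (rule left_inv_inj[of N W V z i]) (use WV y0 that in \<open>auto simp: y_def\<close>)
    show "\<forall>j\<in>J. a j = 0"
    proof
      fix j assume "j \<in> J"
      show "a j = 0"
        by (rule vander[of J N a j]) (use fin cJ z0 \<open>j \<in> J\<close> in \<open>auto simp: z_def W_def\<close>)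
    qed
  qed
qed



abbreviation "pkeys \<equiv> Poly_Mapping.keys"
abbreviation "plook \<equiv> Poly_Mapping.lookup"
abbreviation "psingle \<equiv> Poly_Mapping.single"

definition mev :: "(nat \<Rightarrow> complex) \<Rightarrow> (nat \<Rightarrow>\<^sub>0 nat) \<Rightarrow> complex" where
  "mev v \<alpha> = (\<Prod>i\<in>pkeys \<alpha>. v i ^ plook \<alpha> i)"

lemma md_super: "finite S \<Longrightarrow> pkeys \<alpha> \<subseteq> S \<Longrightarrow> mon_deg \<alpha> = (\<Sum>i\<in>S. plook \<alpha> i)"
  unfolding mon_deg_def
  by (rule sum.mono_neutral_left) (auto simp: not_in_keys_iff_lookup_eq_zero)

lemma mev_super: "finite S \<Longrightarrow> pkeys \<alpha> \<subseteq> S \<Longrightarrow> mev v \<alpha> = (\<Prod>i\<in>S. v i ^ plook \<alpha> i)"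
  unfolding mev_def
  by (rule prod.mono_neutral_left) (auto simp: not_in_keys_iff_lookup_eq_zero)

lemma md_add: "mon_deg (\<alpha> + \<beta>) = mon_deg \<alpha> + mon_deg \<beta>"
proof -
  let ?S = "pkeys \<alpha> \<union> pkeys \<beta>"
  have "mon_deg (\<alpha> + \<beta>) = (\<Sum>i\<in>?S. plook (\<alpha> + \<beta>) i)"
    using keys_add[of \<alpha> \<beta>] by (intro md_super) auto
  also have "\<dots> = (\<Sum>i\<in>?S. plook \<alpha> i) + (\<Sum>i\<in>?S. plook \<beta> i)"
    by (simp add: lookup_add sum.distrib)
  also have "\<dots> = mon_deg \<alpha> + mon_deg \<beta>"
    using md_super[of ?S \<alpha>] md_super[of ?S \<beta>] by auto
  finally show ?thesis .
qed

lemma mev_add: "mev v (\<alpha> + \<beta>) = mev v \<alpha> * mev v \<beta>"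
proof -
  let ?S = "pkeys \<alpha> \<union> pkeys \<beta>"
  have "mev v (\<alpha> + \<beta>) = (\<Prod>i\<in>?S. v i ^ plook (\<alpha> + \<beta>) i)"
    using keys_add[of \<alpha> \<beta>] by (intro mev_super) auto
  also have "\<dots> = (\<Prod>i\<in>?S. v i ^ plook \<alpha> i) * (\<Prod>i\<in>?S. v i ^ plook \<beta> i)"
    by (simp add: lookup_add power_add prod.distrib)
  also have "\<dots> = mev v \<alpha> * mev v \<beta>"
    using mev_super[of ?S \<alpha>] mev_super[of ?S \<beta>] by auto
  finally show ?thesis .
qed

lemma mev_single: "mev v (psingle k 1) = v k"
  unfolding mev_def by simp

lemma mev_zero: "mev v 0 = 1"
  unfolding mev_def by simp

lemma md_single: "mon_deg (psingle k 1) = 1"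
  unfolding mon_deg_def by simp

lemma md_pos: "\<alpha> \<noteq> 0 \<Longrightarrow> mon_deg \<alpha> \<ge> 1"
proof -
  assume "\<alpha> \<noteq> 0"
  then obtain i where i: "i \<in> pkeys \<alpha>" by (metis all_not_in_conv keys_eq_empty)
  have "plook \<alpha> i \<le> mon_deg \<alpha>" unfolding mon_deg_def
    using i by (intro member_le_sum) auto
  moreover have "plook \<alpha> i \<ge> 1" using i by (simp add: in_keys_iff)
  ultimately show ?thesis by simp
qed

lemma card_keys_le: "card (pkeys \<alpha>) \<le> mon_deg \<alpha>"
proof -
  have "card (pkeys \<alpha>) = (\<Sum>i\<in>pkeys \<alpha>. 1)" by simp
  also have "\<dots> \<le> mon_deg \<alpha>" unfolding mon_deg_def
    by (intro sum_mono) (simp add: in_keys_iff)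
  finally show ?thesis .
qed

lemma md1: assumes "mon_deg \<alpha> = 1" shows "\<alpha> = psingle (SOME k. k \<in> pkeys \<alpha>) 1"
proof -
  have "\<alpha> \<noteq> 0" using assms by (auto simp: mon_deg_def)
  then have ne: "pkeys \<alpha> \<noteq> {}" by simp
  define k where "k = (SOME k. k \<in> pkeys \<alpha>)"
  have k: "k \<in> pkeys \<alpha>" unfolding k_def using ne by (simp add: some_in_eq)
  have "card (pkeys \<alpha>) \<le> 1" using card_keys_le[of \<alpha>] assms by simp
  then have "\<forall>a\<in>pkeys \<alpha>. \<forall>b\<in>pkeys \<alpha>. a = b" using card_le_Suc0_iff_eq[of "pkeys \<alpha>"] by simp
  then have K: "pkeys \<alpha> = {k}" using k by blast
  then have "mon_deg \<alpha> = plook \<alpha> k" unfolding mon_deg_def by simp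
  then have ak: "plook \<alpha> k = 1" using assms by simp
  show ?thesis unfolding k_def[symmetric]
  proof (rule poly_mapping_eqI)
    fix j show "plook \<alpha> j = plook (psingle k 1) j"
      using K ak by (cases "j = k") (auto simp: lookup_single when_def not_in_keys_iff_lookup_eq_zero[symmetric])
  qed
qed

lemma md1_ex: "mon_deg \<alpha> = 1 \<Longrightarrow> \<exists>k. \<alpha> = psingle k 1"
  using md1 by blast

lemma md2_ex: assumes "mon_deg \<alpha> = 2" shows "\<exists>i k. \<alpha> = psingle i 1 + psingle k 1"
proof -
  have "\<alpha> \<noteq> 0" using assms by (auto simp: mon_deg_def)
  then obtain i where i: "i \<in> pkeys \<alpha>" by (metis all_not_in_conv keys_eq_empty)
  have split: "mon_deg \<alpha> = plook \<alpha> i + (\<Sum>j\<in>pkeys \<alpha> - {i}. plook \<alpha> j)"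
    unfolding mon_deg_def using i by (simp add: sum.remove)
  have ai: "plook \<alpha> i \<ge> 1" using i by (simp add: in_keys_iff)
  show ?thesis
  proof (cases "pkeys \<alpha> - {i} = {}")
    case True
    then have K: "pkeys \<alpha> = {i}" using i by auto
    then have "plook \<alpha> i = 2" using split assms True by simp
    then have "\<alpha> = psingle i 1 + psingle i 1"
      by (intro poly_mapping_eqI) (use K in \<open>auto simp: lookup_add lookup_single when_def not_in_keys_iff_lookup_eq_zero[symmetric]\<close>)
    then show ?thesis by blast
  next
    case False
    then obtain k where k: "k \<in> pkeys \<alpha>" "k \<noteq> i" by auto
    have ak: "plook \<alpha> k \<ge> 1" using k by (simp add: in_keys_iff)
    have split2: "(\<Sum>j\<in>pkeys \<alpha> - {i}. plook \<alpha> j) = plook \<alpha> k + (\<Sum>j\<in>pkeys \<alpha> - {i} - {k}. plook \<alpha> j)"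
      using k by (intro sum.remove) auto
    have rest: "(\<Sum>j\<in>pkeys \<alpha> - {i} - {k}. plook \<alpha> j) = 0" and a1: "plook \<alpha> i = 1" and a2: "plook \<alpha> k = 1"
      using split split2 assms ai ak by linarith+
    have "\<forall>j\<in>pkeys \<alpha> - {i} - {k}. plook \<alpha> j = 0" using rest by simp
    then have K: "pkeys \<alpha> \<subseteq> {i, k}" by (auto simp: in_keys_iff)
    have "\<alpha> = psingle i 1 + psingle k 1"
    proof (rule poly_mapping_eqI)
      fix j
      show "plook \<alpha> j = plook (psingle i 1 + psingle k 1) j"
        using K a1 a2 k(2)
        by (cases "j = i"; cases "j = k") (auto simp: lookup_add lookup_single when_def not_in_keys_iff_lookup_eq_zero[symmetric])
    qed
    then show ?thesis by blast
  qed
qed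

lemma md_zero: "mon_deg \<alpha> = 0 \<Longrightarrow> \<alpha> = 0"
  using md_pos by fastforce


lemma eval_scale: "mpoly_eval g (\<lambda>i. t * v i) = (\<Sum>\<beta>\<in>pkeys g. plook g \<beta> * (t ^ mon_deg \<beta> * mev v \<beta>))"
  unfolding mpoly_eval_def mev_def mon_deg_def
  by (simp add: power_mult_distrib prod.distrib power_sum)

lemma homog:
  assumes H: "\<And>t. mpoly_eval g (\<lambda>i. t * v i) = 0"
  shows "(\<Sum>\<beta>\<in>{\<beta>\<in>pkeys g. mon_deg \<beta> = d}. plook g \<beta> * mev v \<beta>) = 0"
proof -
  define p where "p = (\<Sum>\<beta>\<in>pkeys g. monom (plook g \<beta> * mev v \<beta>) (mon_deg \<beta>))"
  have "poly p t = 0" for t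
    using H[of t] unfolding eval_scale p_def by (simp add: poly_sum poly_monom mult_ac)
  then have "p = 0" using poly_all_0_iff_0 by blast
  then have "coeff p d = 0" by simp
  moreover have "coeff p d = (\<Sum>\<beta>\<in>pkeys g. if mon_deg \<beta> = d then plook g \<beta> * mev v \<beta> else 0)"
    unfolding p_def coeff_sum coeff_monom by (simp add: eq_commute)
  ultimately show ?thesis by (simp add: sum.inter_filter)
qed



lemma mev_single': "mev v (psingle k (Suc 0)) = v k"
  using mev_single[of v k] by simp

lemma md_single': "mon_deg (psingle k (Suc 0)) = Suc 0"
  using md_single[of k] by simp

lemma reindex1:
  assumes g: "g \<in> poly_ring n"
  shows "(\<Sum>\<beta>\<in>{\<beta>\<in>pkeys g. mon_deg \<beta> = 1}. plook g \<beta> * mev v \<beta>) = (\<Sum>k\<le>n. plook g (psingle k 1) * v k)"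
proof -
  have inj: "inj_on (\<lambda>k. psingle k (1::nat)) {..n}"
  proof (rule inj_onI)
    fix k k' assume eq: "psingle k (1::nat) = psingle k' 1"
    have "plook (psingle k (1::nat)) k = plook (psingle k' 1) k" by (simp only: eq)
    then show "k = k'" by (auto simp: lookup_single when_def split: if_splits)
  qed
  have "(\<Sum>k\<le>n. plook g (psingle k 1) * v k) = (\<Sum>\<beta>\<in>(\<lambda>k. psingle k 1) ` {..n}. plook g \<beta> * mev v \<beta>)"
    by (subst sum.reindex[OF inj]) (simp add: mev_single mev_single')
  also have "\<dots> = (\<Sum>\<beta>\<in>{\<beta>\<in>pkeys g. mon_deg \<beta> = 1}. plook g \<beta> * mev v \<beta>)"
  proof (rule sum.mono_neutral_right)
    show "finite ((\<lambda>k. psingle k 1) ` {..n})" by simp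
    show "{\<beta> \<in> pkeys g. mon_deg \<beta> = 1} \<subseteq> (\<lambda>k. psingle k 1) ` {..n}"
    proof
      fix \<beta> assume b: "\<beta> \<in> {\<beta> \<in> pkeys g. mon_deg \<beta> = 1}"
      then obtain k where k: "\<beta> = psingle k 1" using md1_ex by blast
      have "pkeys \<beta> \<subseteq> {..n}" using b g by (auto simp: poly_ring_def)
      then have "k \<le> n" using k by simp
      then show "\<beta> \<in> (\<lambda>k. psingle k 1) ` {..n}" using k by blast
    qed
    show "\<forall>i\<in>(\<lambda>k. psingle k 1) ` {..n} - {\<beta> \<in> pkeys g. mon_deg \<beta> = 1}. plook g i * mev v i = 0"
      by (auto simp: md_single md_single' in_keys_iff)
  qed
  finally show ?thesis by simp
qed

lemma apolar_exists:
  assumes F: "F \<in> forms n 2" and r: "n + 1 \<le> r"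
  shows "has_apolar_star n r F"
proof -
  define fp :: "(nat \<Rightarrow>\<^sub>0 nat) \<Rightarrow> complex" where "fp \<alpha> = (\<Prod>i\<in>pkeys \<alpha>. of_nat (fact (plook \<alpha> i)))" for \<alpha>
  define A where "A i k = (if i \<le> n \<and> k \<le> n then plook F (psingle i 1 + psingle k 1) * fp (psingle i 1 + psingle k 1) / 2 else 0)" for i k
  have symA: "symm A" unfolding symm_def A_def by (auto simp: add.commute)
  have supA: "suppl (Suc n) A" unfolding suppl_def A_def by auto
  obtain l Q d where C: "(\<forall>i k. A i k = (\<Sum>m<Suc n. d m * Q m i * Q m k)) \<and>
     (\<forall>j<Suc n. \<forall>m<Suc n. (\<Sum>k<Suc n. l j k * Q m k) = (if j = m then 1 else 0)) \<and>
     injN (Suc n) Q \<and>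
     (\<forall>J a. finite J \<longrightarrow> card J = Suc n \<longrightarrow> (\<forall>k<Suc n. (\<Sum>j\<in>J. a j * l j k) = 0) \<longrightarrow> (\<forall>j\<in>J. a j = 0))"
    using LA_package[OF symA supA] by (elim exE) (erule that)
  have Da: "\<forall>i k. A i k = (\<Sum>m<Suc n. d m * Q m i * Q m k)" using C by (rule conjunct1)
  have Dl: "\<forall>j<Suc n. \<forall>m<Suc n. (\<Sum>k<Suc n. l j k * Q m k) = (if j = m then 1 else 0)"
    using C by (blast dest: conjunct2 conjunct1)
  have Dinj: "injN (Suc n) Q" using C by (blast dest: conjunct2 conjunct1)
  have Dind: "\<forall>J a. finite J \<longrightarrow> card J = Suc n \<longrightarrow> (\<forall>k<Suc n. (\<Sum>j\<in>J. a j * l j k) = 0) \<longrightarrow> (\<forall>j\<in>J. a j = 0)"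
    using C by (blast dest: conjunct2)
  have SF: "star_forms n r l"
    unfolding star_forms_def
  proof (intro conjI allI impI)
    show "n + 1 \<le> r" by (rule r)
  next
    fix J a assume J: "J \<subseteq> {..<r}" "card J = n + 1" and H: "\<forall>k\<le>n. (\<Sum>j\<in>J. a j * l j k) = 0"
    have "finite J" using J(1) finite_subset by blast
    moreover have "\<forall>k<Suc n. (\<Sum>j\<in>J. a j * l j k) = 0" using H by (simp add: less_Suc_eq_le)
    ultimately show "\<forall>j\<in>J. a j = 0" using Dind J(2) by simp
  qed
  have cone: "(\<lambda>k. t * Q m k) \<in> star_cone n r l" if m: "m \<le> n" for m t
    unfolding star_cone_def
  proof (intro CollectI exI conjI)
    show "{..n} - {m} \<subseteq> {..<r}" using r by auto
    show "card ({..n} - {m}) = n" using m by (simp add: card_Diff_singleton)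
    show "\<forall>j\<in>{..n} - {m}. lin_eval n (l j) (\<lambda>k. t * Q m k) = 0"
    proof
      fix j assume j: "j \<in> {..n} - {m}"
      have "lin_eval n (l j) (\<lambda>k. t * Q m k) = t * (\<Sum>k<Suc n. l j k * Q m k)"
        unfolding lin_eval_def lessThan_Suc_atMost by (simp add: sum_distrib_left mult_ac)
      also have "\<dots> = 0" using Dl j m by auto
      finally show "lin_eval n (l j) (\<lambda>k. t * Q m k) = 0" .
    qed
  qed
  show ?thesis
    unfolding has_apolar_star_def
  proof (intro exI conjI)
    show "star_forms n r l" by (rule SF)
    show "star_ideal n r l \<subseteq> perp n F"
    proof
      fix g assume g: "g \<in> star_ideal n r l"
      then have gP: "g \<in> poly_ring n" and gv: "\<And>v. v \<in> star_cone n r l \<Longrightarrow> mpoly_eval g v = 0"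
        by (auto simp: star_ideal_def)
      have gk: "\<And>\<beta>. \<beta> \<in> pkeys g \<Longrightarrow> pkeys \<beta> \<subseteq> {..n}" using gP by (auto simp: poly_ring_def)
      have Fk: "\<And>\<beta>. \<beta> \<in> pkeys F \<Longrightarrow> mon_deg \<beta> = 2" using F by (auto simp: forms_def)
      have H: "(\<Sum>\<beta>\<in>{\<beta>\<in>pkeys g. mon_deg \<beta> = dd}. plook g \<beta> * mev (\<lambda>k. Q m k) \<beta>) = 0"
        if "m \<le> n" for m dd
        by (rule homog[of g "\<lambda>k. Q m k"]) (simp add: gv cone that)
      have md00: "mon_deg 0 = 0" by (simp add: mon_deg_def)
      have g0: "plook g 0 = 0"
      proof (cases "0 \<in> pkeys g")
        case True
        then have "{\<beta>\<in>pkeys g. mon_deg \<beta> = 0} = {0}" using md_zero md00 by auto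
        then show ?thesis using H[of 0 0] by (simp add: mev_zero)
      next
        case False
        then show ?thesis by (simp add: not_in_keys_iff_lookup_eq_zero)
      qed
      have g1: "plook g (psingle k 1) = 0" for k
      proof (cases "k \<le> n")
        case True
        have "\<forall>m<Suc n. (\<Sum>k<Suc n. Q m k * plook g (psingle k 1)) = 0"
        proof (intro allI impI)
          fix m assume "m < Suc n"
          then have m: "m \<le> n" by simp
          have "(\<Sum>k<Suc n. Q m k * plook g (psingle k 1)) = (\<Sum>k\<le>n. plook g (psingle k 1) * Q m k)"
            unfolding lessThan_Suc_atMost by (simp add: mult.commute)
          also have "\<dots> = 0" using reindex1[OF gP, of "\<lambda>k. Q m k"] H[OF m, of 1] by simp
          finally show "(\<Sum>k<Suc n. Q m k * plook g (psingle k 1)) = 0" .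
        qed
        then show ?thesis using Dinj True unfolding injN_def by auto
      next
        case False
        have "psingle k 1 \<notin> pkeys g"
        proof
          assume "psingle k 1 \<in> pkeys g"
          then have "pkeys (psingle k (1::nat)) \<subseteq> {..n}" using gk by blast
          then show False using False by simp
        qed
        then show ?thesis by (simp add: not_in_keys_iff_lookup_eq_zero)
      qed
      have low: "plook g \<beta> = 0" if "mon_deg \<beta> \<le> 1" for \<beta>
      proof (cases "mon_deg \<beta> = 0")
        case True then show ?thesis using md_zero g0 by blast
      next
        case False
        then have "mon_deg \<beta> = 1" using that by simp
        then obtain k where "\<beta> = psingle k 1" using md1_ex by blast
        then show ?thesis using g1 by simp
      qed
      have quad: "(\<Sum>\<beta>\<in>pkeys g. plook g \<beta> * plook F \<beta> * fp \<beta>) = 0"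
      proof -
        have term_eq: "plook g \<beta> * plook F \<beta> * fp \<beta> =
            2 * (\<Sum>m<Suc n. d m * (if mon_deg \<beta> = 2 then plook g \<beta> * mev (\<lambda>k. Q m k) \<beta> else 0))"
          if b: "\<beta> \<in> pkeys g" for \<beta>
        proof (cases "mon_deg \<beta> = 2")
          case False
          then have "plook F \<beta> = 0" using Fk by (metis not_in_keys_iff_lookup_eq_zero)
          then show ?thesis using False by simp
        next
          case True
          then obtain i k where bik: "\<beta> = psingle i 1 + psingle k 1" using md2_ex by blast
          have "i \<in> pkeys \<beta>" "k \<in> pkeys \<beta>" using bik by (auto simp: in_keys_iff lookup_add lookup_single when_def)
          then have ik: "i \<le> n" "k \<le> n" using gk[OF b] by auto
          have "plook F \<beta> * fp \<beta> = 2 * A i k" using ik bik by (simp add: A_def)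
          also have "\<dots> = 2 * (\<Sum>m<Suc n. d m * Q m i * Q m k)" using Da by simp
          finally have FA: "plook F \<beta> * fp \<beta> = 2 * (\<Sum>m<Suc n. d m * Q m i * Q m k)" .
          have mv: "mev (\<lambda>k. Q m k) \<beta> = Q m i * Q m k" for m
            using bik by (simp add: mev_add mev_single mev_single')
          have "plook g \<beta> * plook F \<beta> * fp \<beta> = plook g \<beta> * (plook F \<beta> * fp \<beta>)" by (simp add: mult_ac)
          also have "\<dots> = plook g \<beta> * (2 * (\<Sum>m<Suc n. d m * Q m i * Q m k))" using FA by simp
          also have "\<dots> = 2 * (\<Sum>m<Suc n. d m * (plook g \<beta> * (Q m i * Q m k)))"
            unfolding sum_distrib_left by (rule sum.cong) (simp_all add: mult_ac)
          also have "\<dots> = 2 * (\<Sum>m<Suc n. d m * (if mon_deg \<beta> = 2 then plook g \<beta> * mev (\<lambda>k. Q m k) \<beta> else 0))"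
            using True by (simp add: mv)
          finally show ?thesis .
        qed
        have "(\<Sum>\<beta>\<in>pkeys g. plook g \<beta> * plook F \<beta> * fp \<beta>) =
            (\<Sum>\<beta>\<in>pkeys g. 2 * (\<Sum>m<Suc n. d m * (if mon_deg \<beta> = 2 then plook g \<beta> * mev (\<lambda>k. Q m k) \<beta> else 0)))"
          using term_eq by (intro sum.cong) auto
        also have "\<dots> = 2 * (\<Sum>m<Suc n. d m * (\<Sum>\<beta>\<in>pkeys g. (if mon_deg \<beta> = 2 then plook g \<beta> * mev (\<lambda>k. Q m k) \<beta> else 0)))"
          by (simp add: sum_distrib_left sum.swap[of _ "pkeys g"])
        also have "\<dots> = 2 * (\<Sum>m<Suc n. d m * (\<Sum>\<beta>\<in>{\<beta>\<in>pkeys g. mon_deg \<beta> = 2}. plook g \<beta> * mev (\<lambda>k. Q m k) \<beta>))"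
          by (simp add: sum.inter_filter)
        also have "\<dots> = 0" using H by simp
        finally show ?thesis .
      qed
      show "g \<in> perp n F"
        unfolding perp_def
      proof (intro CollectI conjI allI)
        show "g \<in> poly_ring n" by (rule gP)
      next
        fix \<gamma>
        show "diff_act g F \<gamma> = 0"
        proof (cases "\<gamma> = 0")
          case True
          then show ?thesis using quad by (simp add: diff_act_def fp_def)
        next
          case False
          have "mon_deg \<gamma> \<ge> 1" using md_pos[OF False] .
          show ?thesis
            unfolding diff_act_def
          proof (rule sum.neutral, rule ballI)
            fix \<beta> assume b: "\<beta> \<in> pkeys g"
            have "plook g \<beta> \<noteq> 0" using b by (simp add: in_keys_iff)
            then have "\<not> mon_deg \<beta> \<le> 1" using low by blast
            then have "mon_deg \<beta> \<ge> 2" by simp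
            then have "mon_deg (\<beta> + \<gamma>) \<noteq> 2" using \<open>mon_deg \<gamma> \<ge> 1\<close> by (simp add: md_add)
            then have "plook F (\<beta> + \<gamma>) = 0" using Fk by (metis not_in_keys_iff_lookup_eq_zero)
            then show "plook g \<beta> * plook F (\<beta> + \<gamma>) *
               (\<Prod>i\<in>pkeys (\<beta> + \<gamma>). of_nat (fact (plook (\<beta> + \<gamma>) i)) / of_nat (fact (plook \<gamma> i))) = 0"
              by simp
          qed
        qed
      qed
    qed
  qed
qed

theorem lemma3p2:
  fixes n r :: nat
  assumes "n \<ge> 1"
  shows "general_form n 2 (has_apolar_star n r) \<longleftrightarrow> r \<ge> n + 1"
proof
  assume "general_form n 2 (has_apolar_star n r)"
  then obtain F where "F \<in> forms n 2" "has_apolar_star n r F" unfolding general_form_def by blast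
  then show "r \<ge> n + 1" unfolding has_apolar_star_def star_forms_def by blast
next
  assume r: "r \<ge> n + 1"
  have ev: "mpoly_eval (Poly_Mapping.single 0 1 :: (nat \<Rightarrow>\<^sub>0 nat, complex) mpoly) x = 1" for x
    by (simp add: mpoly_eval_def)
  have F0: "(0 :: (nat, complex) mpoly) \<in> forms n 2" by (simp add: forms_def poly_ring_def)
  show "general_form n 2 (has_apolar_star n r)"
    unfolding general_form_def
    by (rule exI[of _ "Poly_Mapping.single 0 1"]) (use ev F0 apolar_exists r in auto)
qed


end
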